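(* Let $X,Y\in\mathbb M(n)$ with $Y$ positive semidefinite, with eigenvalues $\lambda_1(Y)\ge\dots\ge\lambda_n(Y)\ge0$. For $1\le r\le n$, let $$\mathcal W(X,Y)=\Big\{\sum_{i=1}^r\langle u_i,Xu_i\rangle:\ u_1,\dots,u_r\in\mathbb C^n\text{ orthonormal},\ Yu_i=\lambda_i(Y)u_i\ \forall\,1\le i\le r\Big\}.$$ Then $\mathcal W(X,Y)$ is a convex subset of $\mathbb C$.
   Context: Inner products on $\mathbb C^n$ are conjugate linear in the first argument and linear in the second. *)

theory Defs
  imports "HOL-Analysis.Convex" "Jordan_Normal_Form.Char_Poly" "Jordan_Normal_Form.Conjugate"
begin

definition cinner :: "complex vec \<Rightarrow> complex vec \<Rightarrow> complex" where
  "cinner u v = conjugate u \<bullet> v"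

definition hermitian_mat :: "nat \<Rightarrow> complex mat \<Rightarrow> bool" where
  "hermitian_mat n Y \<longleftrightarrow> Y \<in> carrier_mat n n \<and>
     (\<forall>i<n. \<forall>j<n. Y $$ (i, j) = cnj (Y $$ (j, i)))"

definition psd_mat :: "nat \<Rightarrow> complex mat \<Rightarrow> bool" where
  "psd_mat n Y \<longleftrightarrow> hermitian_mat n Y \<and>
     (\<forall>v \<in> carrier_vec n. Im (cinner v (Y *\<^sub>v v)) = 0 \<and> Re (cinner v (Y *\<^sub>v v)) \<ge> 0)"

text \<open>Eigenvalues (with algebraic multiplicity, i.e. roots of the characteristic
  polynomial) of a Hermitian matrix, listed in non-increasing order:
  entry k (0-based) is lambda_(k+1)(Y).\<close>
definition eigvals_desc :: "complex mat \<Rightarrow> real list" where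
  "eigvals_desc Y = rev (sorted_list_of_multiset (image_mset Re (proots (char_poly Y))))"

definition W_set :: "nat \<Rightarrow> nat \<Rightarrow> complex mat \<Rightarrow> complex mat \<Rightarrow> complex set" where
  "W_set n r X Y = { (\<Sum>i<r. cinner (u i) (X *\<^sub>v u i)) | u.
      (\<forall>i<r. u i \<in> carrier_vec n) \<and>
      (\<forall>i<r. \<forall>j<r. cinner (u i) (u j) = (if i = j then 1 else 0)) \<and>
      (\<forall>i<r. Y *\<^sub>v u i = complex_of_real (eigvals_desc Y ! i) \<cdot>\<^sub>v u i) }"

end

theory Submission
  imports Defs "HOL-Computational_Algebra.Fundamental_Theorem_Algebra"
begin


definition ip :: "nat \<Rightarrow> (nat \<Rightarrow> complex) \<Rightarrow> (nat \<Rightarrow> complex) \<Rightarrow> complex" where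
  "ip n f g = (\<Sum>k<n. cnj (f k) * g k)"
definition mv :: "nat \<Rightarrow> (nat \<Rightarrow> nat \<Rightarrow> complex) \<Rightarrow> (nat \<Rightarrow> complex) \<Rightarrow> nat \<Rightarrow> complex" where
  "mv n A f i = (\<Sum>j<n. A i j * f j)"

lemma ip_conj: "cnj (ip n f g) = ip n g f"
  unfolding ip_def by (simp add: mult.commute)

lemma ip_lc_right: "ip n z (\<lambda>k. \<Sum>i\<in>I. c i * a i k) = (\<Sum>i\<in>I. c i * ip n z (a i))"
  unfolding ip_def by (simp add: sum_distrib_left sum_distrib_right mult_ac sum.swap[of _ I])

lemma ip_lc_left: "ip n (\<lambda>k. \<Sum>i\<in>I. c i * a i k) z = (\<Sum>i\<in>I. cnj (c i) * ip n (a i) z)"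
  unfolding ip_def by (simp add: sum_distrib_left sum_distrib_right mult_ac sum.swap[of _ I])

lemma ip_comb_right: "ip n z (\<lambda>k. \<alpha> * f k + \<beta> * g k) = \<alpha> * ip n z f + \<beta> * ip n z g"
  unfolding ip_def by (simp add: sum_distrib_left sum.distrib algebra_simps)

lemma ip_comb_left: "ip n (\<lambda>k. \<alpha> * f k + \<beta> * g k) z = cnj \<alpha> * ip n f z + cnj \<beta> * ip n g z"
  unfolding ip_def by (simp add: sum_distrib_left sum.distrib algebra_simps)

lemma ip_cong: "(\<And>k. k < n \<Longrightarrow> f k = f' k) \<Longrightarrow> (\<And>k. k < n \<Longrightarrow> g k = g' k) \<Longrightarrow> ip n f g = ip n f' g'"
  unfolding ip_def by (rule sum.cong) auto

lemma mv_cong: "(\<And>k. k < n \<Longrightarrow> f k = f' k) \<Longrightarrow> mv n A f i = mv n A f' i"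
  unfolding mv_def by (rule sum.cong) auto

lemma mv_lc: "mv n A (\<lambda>k. \<Sum>i\<in>I. c i * a i k) j = (\<Sum>i\<in>I. c i * mv n A (a i) j)"
  unfolding mv_def by (simp add: sum_distrib_left sum_distrib_right mult_ac sum.swap[of _ I])

lemma mv_comb: "mv n A (\<lambda>k. \<alpha> * f k + \<beta> * g k) j = \<alpha> * mv n A f j + \<beta> * mv n A g j"
  unfolding mv_def by (simp add: sum_distrib_left sum.distrib algebra_simps)

lemma ip_self: "ip n f f = of_real (\<Sum>k<n. (cmod (f k))\<^sup>2)"
  unfolding ip_def of_real_sum by (rule sum.cong) (simp_all add: complex_norm_square mult.commute del: of_real_power)

lemma ip_self_zero: assumes "ip n f f = 0" "k < n" shows "f k = 0"
proof -
  have "(\<Sum>k<n. (cmod (f k))\<^sup>2) = 0" using assms(1) unfolding ip_self by (simp only: of_real_eq_0_iff)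
  then have "\<forall>k\<in>{..<n}. (cmod (f k))\<^sup>2 = 0" by (subst (asm) sum_nonneg_eq_0_iff) auto
  then show ?thesis using assms(2) by auto
qed

lemma ip_scale_left: "ip n (\<lambda>k. c * f k) g = cnj c * ip n f g"
  unfolding ip_def by (simp add: sum_distrib_left mult_ac)
lemma ip_scale_right: "ip n f (\<lambda>k. c * g k) = c * ip n f g"
  unfolding ip_def by (simp add: sum_distrib_left mult_ac)
lemma ip_minus_right: "ip n z (\<lambda>k. f k - c * g k) = ip n z f - c * ip n z g"
  unfolding ip_def by (simp add: sum_distrib_left sum_subtractf algebra_simps)
lemma ip_minus_left: "ip n (\<lambda>k. f k - c * g k) z = ip n f z - cnj c * ip n g z"
  unfolding ip_def by (simp add: sum_distrib_left sum_subtractf algebra_simps)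
lemma mv_scale: "mv n A (\<lambda>k. c * f k) j = c * mv n A f j"
  unfolding mv_def by (simp add: sum_distrib_left mult_ac)
lemma mv_minus: "mv n A (\<lambda>k. f k - c * g k) j = mv n A f j - c * mv n A g j"
  unfolding mv_def by (simp add: sum_distrib_left sum_subtractf algebra_simps)

definition ON :: "nat \<Rightarrow> nat \<Rightarrow> (nat \<Rightarrow> nat \<Rightarrow> complex) \<Rightarrow> bool" where
  "ON n m a \<longleftrightarrow> (\<forall>i<m. \<forall>j<m. ip n (a i) (a j) = (if i = j then 1 else 0))"
definition inspan :: "nat \<Rightarrow> nat \<Rightarrow> (nat \<Rightarrow> nat \<Rightarrow> complex) \<Rightarrow> (nat \<Rightarrow> complex) \<Rightarrow> bool" where
  "inspan n m a z \<longleftrightarrow> (\<forall>k<n. z k = (\<Sum>i<m. ip n (a i) z * a i k))"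
definition FF :: "nat \<Rightarrow> (nat \<Rightarrow> nat \<Rightarrow> complex) \<Rightarrow> nat \<Rightarrow> (nat \<Rightarrow> nat \<Rightarrow> complex) \<Rightarrow> complex" where
  "FF n A m a = (\<Sum>i<m. ip n (a i) (mv n A (a i)))"
definition eig :: "nat \<Rightarrow> (nat \<Rightarrow> nat \<Rightarrow> complex) \<Rightarrow> complex \<Rightarrow> (nat \<Rightarrow> complex) \<Rightarrow> bool" where
  "eig n Y c f \<longleftrightarrow> (\<forall>k<n. mv n Y f k = c * f k)"

lemma ON_lc: assumes "ON n m a" "j < m"
  shows "ip n (a j) (\<lambda>k. \<Sum>i<m. c i * a i k) = c j"
proof -
  have "ip n (a j) (\<lambda>k. \<Sum>i<m. c i * a i k) = (\<Sum>i<m. c i * ip n (a j) (a i))"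
    by (rule ip_lc_right)
  also have "\<dots> = (\<Sum>i<m. if i = j then c i else 0)"
    by (rule sum.cong) (use assms in \<open>auto simp: ON_def\<close>)
  finally show ?thesis using assms(2) by simp
qed

lemma inspan_lc: assumes "ON n m a" shows "inspan n m a (\<lambda>k. \<Sum>i<m. c i * a i k)"
  unfolding inspan_def using ON_lc[OF assms] by simp

lemma inspan_basis: assumes "ON n m a" "j < m" shows "inspan n m a (a j)"
proof -
  have "\<And>k. (\<Sum>i<m. ip n (a i) (a j) * a i k) = (\<Sum>i<m. if i = j then a j k else 0)"
    by (rule sum.cong) (use assms in \<open>auto simp: ON_def\<close>)
  then show ?thesis unfolding inspan_def using assms(2) by simp
qed

lemma inspan_lin: assumes "inspan n m a f" "inspan n m a g" "\<And>k. k < n \<Longrightarrow> h k = \<alpha> * f k + \<beta> * g k"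
  shows "inspan n m a h"
proof -
  have ih: "ip n (a i) h = \<alpha> * ip n (a i) f + \<beta> * ip n (a i) g" for i
  proof -
    have "ip n (a i) h = ip n (a i) (\<lambda>k. \<alpha> * f k + \<beta> * g k)" by (rule ip_cong) (use assms(3) in auto)
    then show ?thesis by (simp add: ip_comb_right)
  qed
  show ?thesis unfolding inspan_def
  proof (intro allI impI)
    fix k assume k: "k < n"
    have fk: "f k = (\<Sum>i<m. ip n (a i) f * a i k)" using assms(1) k unfolding inspan_def by blast
    have gk: "g k = (\<Sum>i<m. ip n (a i) g * a i k)" using assms(2) k unfolding inspan_def by blast
    have "h k = \<alpha> * (\<Sum>i<m. ip n (a i) f * a i k) + \<beta> * (\<Sum>i<m. ip n (a i) g * a i k)"
      using assms(3)[OF k] fk gk by simp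
    also have "\<dots> = (\<Sum>i<m. ip n (a i) h * a i k)"
      by (simp add: ih sum_distrib_left sum.distrib algebra_simps)
    finally show "h k = (\<Sum>i<m. ip n (a i) h * a i k)" .
  qed
qed

lemma parseval: assumes "inspan n m a z" shows "(\<Sum>i<m. ip n z (a i) * ip n (a i) g) = ip n z g"
proof -
  have "ip n z g = ip n (\<lambda>k. \<Sum>i<m. ip n (a i) z * a i k) g"
    by (rule ip_cong) (use assms in \<open>auto simp: inspan_def\<close>)
  also have "\<dots> = (\<Sum>i<m. ip n z (a i) * ip n (a i) g)"
    by (simp add: ip_lc_left ip_conj)
  finally show ?thesis by simp
qed

lemma parseval_mv: assumes "inspan n m a z"
  shows "(\<Sum>i<m. ip n (a i) z * ip n g (mv n A (a i))) = ip n g (mv n A z)"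
proof -
  have "ip n g (mv n A z) = ip n g (mv n A (\<lambda>k. \<Sum>i<m. ip n (a i) z * a i k))"
    by (rule ip_cong) (use assms in \<open>auto simp: inspan_def intro: mv_cong\<close>)
  also have "\<dots> = ip n g (\<lambda>j. \<Sum>i<m. ip n (a i) z * mv n A (a i) j)"
    by (rule ip_cong) (simp_all add: mv_lc)
  also have "\<dots> = (\<Sum>i<m. ip n (a i) z * ip n g (mv n A (a i)))"
    by (rule ip_lc_right)
  finally show ?thesis by simp
qed

lemma herm_ip: assumes "\<forall>i<n. \<forall>j<n. Y i j = cnj (Y j i)"
  shows "ip n f (mv n Y g) = ip n (mv n Y f) g"
proof -
  have "ip n f (mv n Y g) = (\<Sum>k<n. \<Sum>j<n. cnj (f k) * Y k j * g j)"
    unfolding ip_def mv_def by (simp only: sum_distrib_left mult.assoc)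
  also have "\<dots> = (\<Sum>j<n. \<Sum>k<n. cnj (f k) * Y k j * g j)" by (rule sum.swap)
  also have "\<dots> = ip n (mv n Y f) g"
    unfolding ip_def mv_def
  proof (rule sum.cong[OF refl])
    fix j assume j: "j \<in> {..<n}"
    have "(\<Sum>k<n. cnj (f k) * Y k j * g j) = (\<Sum>k<n. cnj (Y j k * f k) * g j)"
    proof (rule sum.cong[OF refl])
      fix k assume k: "k \<in> {..<n}"
      have "k < n" "j < n" using j k by auto
      then have "Y k j = cnj (Y j k)" using assms by blast
      then show "cnj (f k) * Y k j * g j = cnj (Y j k * f k) * g j" by simp
    qed
    also have "\<dots> = cnj (\<Sum>k<n. Y j k * f k) * g j" by (simp only: cnj_sum sum_distrib_right)
    finally show "(\<Sum>k<n. cnj (f k) * Y k j * g j) = cnj (\<Sum>k<n. Y j k * f k) * g j" .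
  qed
  finally show ?thesis .
qed

lemma eig_orth: assumes "\<forall>i<n. \<forall>j<n. Y i j = cnj (Y j i)" "eig n Y (of_real c) f" "eig n Y (of_real d) g" "c \<noteq> d"
  shows "ip n f g = 0"
proof -
  have "ip n f (mv n Y g) = ip n f (\<lambda>k. of_real d * g k)"
    by (rule ip_cong) (use assms(3) in \<open>auto simp: eig_def\<close>)
  then have 1: "ip n f (mv n Y g) = of_real d * ip n f g" by (simp add: ip_scale_right)
  have "ip n (mv n Y f) g = ip n (\<lambda>k. of_real c * f k) g"
    by (rule ip_cong) (use assms(2) in \<open>auto simp: eig_def\<close>)
  then have 2: "ip n (mv n Y f) g = of_real c * ip n f g" by (simp add: ip_scale_left)
  from 1 2 herm_ip[OF assms(1)] have "(of_real c - of_real d) * ip n f g = 0"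
    by (simp add: algebra_simps)
  with assms(4) show ?thesis by simp
qed

lemma eig_inspan: assumes "\<forall>i<m. eig n Y c (a i)" "inspan n m a z" shows "eig n Y c z"
  unfolding eig_def
proof (intro allI impI)
  fix k assume k: "k < n"
  have "mv n Y z k = mv n Y (\<lambda>k. \<Sum>i<m. ip n (a i) z * a i k) k"
    by (rule mv_cong) (use assms(2) in \<open>auto simp: inspan_def\<close>)
  also have "\<dots> = (\<Sum>i<m. ip n (a i) z * (c * a i k))"
    by (simp add: mv_lc) (rule sum.cong, use assms(1) k in \<open>auto simp: eig_def\<close>)
  also have "\<dots> = c * z k"
  proof -
    have zk: "z k = (\<Sum>i<m. ip n (a i) z * a i k)" using assms(2) k unfolding inspan_def by blast
    show ?thesis by (subst zk) (simp add: sum_distrib_left mult_ac)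
  qed
  finally show "mv n Y z k = c * z k" .
qed

lemma orth_inspan: assumes "\<forall>i<m. ip n q (a i) = 0" "inspan n m a z" shows "ip n q z = 0"
proof -
  have "ip n q z = ip n q (\<lambda>k. \<Sum>i<m. ip n (a i) z * a i k)"
    by (rule ip_cong) (use assms(2) in \<open>auto simp: inspan_def\<close>)
  also have "\<dots> = 0" by (simp add: ip_lc_right assms(1))
  finally show ?thesis .
qed



definition comb :: "complex \<Rightarrow> (nat \<Rightarrow> complex) \<Rightarrow> complex \<Rightarrow> (nat \<Rightarrow> complex) \<Rightarrow> nat \<Rightarrow> complex" where
  "comb U x V y = (\<lambda>k. U * x k + V * y k)"

lemma ip_comb_comb: "ip n (comb U x V y) (comb U' x V' y) =
   cnj U * U' * ip n x x + cnj U * V' * ip n x y + cnj V * U' * ip n y x + cnj V * V' * ip n y y"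
  unfolding comb_def by (simp add: ip_comb_left ip_comb_right algebra_simps)

lemma ip_mv_comb: "ip n f (mv n A (comb U x V y)) = U * ip n f (mv n A x) + V * ip n f (mv n A y)"
proof -
  have "ip n f (mv n A (comb U x V y)) = ip n f (\<lambda>j. U * mv n A x j + V * mv n A y j)"
    by (rule ip_cong) (simp_all add: comb_def mv_comb)
  then show ?thesis by (simp add: ip_comb_right)
qed

lemma ip_comb_mv: "ip n (comb U x V y) (mv n A (comb U x V y)) =
   cnj U * U * ip n x (mv n A x) + cnj U * V * ip n x (mv n A y) + cnj V * U * ip n y (mv n A x) + cnj V * V * ip n y (mv n A y)"
proof -
  have "ip n (comb U x V y) (mv n A (comb U x V y)) = cnj U * ip n x (mv n A (comb U x V y)) + cnj V * ip n y (mv n A (comb U x V y))"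
    unfolding comb_def by (simp add: ip_comb_left)
  then show ?thesis by (simp add: ip_mv_comb algebra_simps)
qed

lemma ip_self_nonneg: "0 \<le> Re (ip n f f)" "Im (ip n f f) = 0"
  unfolding ip_self by (simp_all add: sum_nonneg)

lemma TH2:
  assumes x: "ip n x x = 1" and y: "ip n y y = 1" and t: "0 \<le> t" "t \<le> 1"
  shows "\<exists>U V. ip n (comb U x V y) (comb U x V y) = 1 \<and>
      ip n (comb U x V y) (mv n A (comb U x V y)) = of_real (1-t) * ip n x (mv n A x) + of_real t * ip n y (mv n A y)"
proof -
  define a where "a = ip n x (mv n A x)"
  define b where "b = ip n y (mv n A y)"
  show ?thesis
  proof (cases "a = b")
    case True
    have "comb 1 x 0 y = x" by (simp add: comb_def)
    then show ?thesis using x True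
      by (intro exI[of _ 1] exI[of _ 0]) (simp add: a_def[symmetric] b_def[symmetric] algebra_simps flip: of_real_add)
  next
    case False
    define p where "p = (ip n x (mv n A y) - a * ip n x y) / (b - a)"
    define q where "q = (ip n y (mv n A x) - a * ip n y x) / (b - a)"
    define d where "d = p - cnj q"
    define \<omega> where "\<omega> = (if d = 0 then 1 else cnj d / of_real (cmod d))"
    have om: "cnj \<omega> * \<omega> = 1"
      unfolding \<omega>_def by (auto simp: complex_norm_square[symmetric] power2_eq_square field_simps norm_divide
           simp del: of_real_power complex_mult_cnj)
    have "Im (\<omega> * d) = 0"
      unfolding \<omega>_def by (auto simp: complex_norm_square[symmetric] power2_eq_square field_simps norm_divide
           simp del: of_real_power complex_mult_cnj)
    define E where "E = \<omega> * p + cnj \<omega> * q"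
    have ImE: "Im E = 0" using \<open>Im (\<omega> * d) = 0\<close> unfolding E_def d_def by (simp add: algebra_simps)
    define G where "G = \<omega> * ip n x y + cnj \<omega> * ip n y x"
    have "G = \<omega> * ip n x y + cnj (\<omega> * ip n x y)" unfolding G_def using ip_conj[of n x y] by simp
    then have ImG: "Im G = 0" by simp
    define N where "N = (\<lambda>\<tau>::real. (1-\<tau>)^2 + \<tau>^2 + (1-\<tau>)*\<tau>* Re G)"
    define h where "h = (\<lambda>\<tau>::real. (1-\<tau>)*\<tau>*Re E + \<tau>^2 - t * N \<tau>)"
    have "\<exists>\<tau>. 0 \<le> \<tau> \<and> \<tau> \<le> 1 \<and> h \<tau> = 0"
      by (rule IVT') (use t in \<open>auto simp: h_def N_def intro!: continuous_intros\<close>)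
    then obtain \<tau> where tau: "0 \<le> \<tau>" "\<tau> \<le> 1" "h \<tau> = 0" by blast
    define Uc where "Uc = complex_of_real (1 - \<tau>)"
    define Vc where "Vc = complex_of_real \<tau> * \<omega>"
    define z where "z = comb Uc x Vc y"
    define eR where "eR = Re E"
    have E_eq: "E = of_real eR" using ImE unfolding eR_def by (simp add: complex_eq_iff)
    define gR where "gR = Re G"
    have G_eq: "G = of_real gR" using ImG unfolding gR_def by (simp add: complex_eq_iff)
    have VV: "cnj Vc * Vc = of_real (\<tau>^2)"
    proof -
      have "cnj Vc * Vc = of_real \<tau> * of_real \<tau> * (cnj \<omega> * \<omega>)" unfolding Vc_def by (simp add: algebra_simps)
      then show ?thesis using om by (simp add: power2_eq_square)
    qed
    have UU: "cnj Uc * Uc = of_real ((1-\<tau>)^2)" unfolding Uc_def by (simp add: power2_eq_square)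
    have UV: "cnj Uc * Vc * ip n x y + cnj Vc * Uc * ip n y x = of_real ((1-\<tau>)*\<tau>) * G"
      unfolding Uc_def Vc_def G_def by (simp add: algebra_simps)
    have EE: "cnj Uc * Vc * p + cnj Vc * Uc * q = of_real ((1-\<tau>)*\<tau>) * E"
      unfolding Uc_def Vc_def E_def by (simp add: algebra_simps)
    have zz: "ip n z z = of_real (N \<tau>)"
    proof -
      have "ip n z z = cnj Uc * Uc + (cnj Uc * Vc * ip n x y + cnj Vc * Uc * ip n y x) + cnj Vc * Vc"
        unfolding z_def ip_comb_comb x y by simp
      also have "\<dots> = of_real (N \<tau>)" unfolding UU UV VV G_eq N_def gR_def[symmetric]
        by (simp add: algebra_simps)
      finally show ?thesis .
    qed
    have px: "ip n x (mv n A y) = a * ip n x y + (b - a) * p" unfolding p_def using False by (simp add: field_simps)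
    have qy: "ip n y (mv n A x) = a * ip n y x + (b - a) * q" unfolding q_def using False by (simp add: field_simps)
    have zAz0: "ip n z (mv n A z) = a * ip n z z + (b - a) * ((cnj Uc * Vc * p + cnj Vc * Uc * q) + cnj Vc * Vc)"
      unfolding z_def ip_comb_mv ip_comb_comb px qy a_def[symmetric] b_def[symmetric] x y
      by (simp add: algebra_simps)
    have hh: "(1-\<tau>)*\<tau>*eR + \<tau>^2 = t * N \<tau>" using tau(3) unfolding h_def eR_def by simp
    have "(cnj Uc * Vc * p + cnj Vc * Uc * q) + cnj Vc * Vc = of_real ((1-\<tau>)*\<tau>*eR + \<tau>^2)"
      unfolding EE VV E_eq by simp
    also have "\<dots> = of_real t * of_real (N \<tau>)" unfolding hh by simp
    finally have "(cnj Uc * Vc * p + cnj Vc * Uc * q) + cnj Vc * Vc = of_real t * of_real (N \<tau>)" .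
    then have zAz: "ip n z (mv n A z) = (of_real (1-t) * a + of_real t * b) * of_real (N \<tau>)"
      unfolding zAz0 zz by (simp add: algebra_simps)
    have Nnn: "N \<tau> \<ge> 0" using ip_self_nonneg(1)[of n z] zz by simp
    have Nne: "N \<tau> \<noteq> 0"
    proof
      assume N0: "N \<tau> = 0"
      then have z0: "\<And>k. k < n \<Longrightarrow> z k = 0" using zz ip_self_zero[of n z] by simp
      show False
      proof (cases "\<tau> = 0")
        case True
        have "ip n x x = ip n z z" by (rule ip_cong) (simp_all add: z_def comb_def Uc_def Vc_def True)
        then show False using x zz N0 by simp
      next
        case tne: False
        define c where "c = - of_real (1-\<tau>) * cnj \<omega> / of_real \<tau>"
        have yc: "y k = c * x k" if k: "k < n" for k
        proof -
          have "Uc * x k + Vc * y k = 0" using z0[OF k] unfolding z_def comb_def by simp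
          then have "cnj \<omega> * (Uc * x k + Vc * y k) = 0" by simp
          then have "cnj \<omega> * Uc * x k + of_real \<tau> * (cnj \<omega> * \<omega>) * y k = 0" unfolding Vc_def by (simp add: algebra_simps)
          then have "cnj \<omega> * Uc * x k + of_real \<tau> * y k = 0" by (simp only: om mult_1_right)
          then have "of_real \<tau> * y k = - cnj \<omega> * Uc * x k" by (metis add.commute add_eq_0_iff mult_minus_left)
          then show ?thesis unfolding c_def Uc_def using tne by (simp add: field_simps)
        qed
        have "ip n y y = ip n (\<lambda>k. c * x k) (\<lambda>k. c * x k)" by (rule ip_cong) (simp_all add: yc)
        then have cc: "cnj c * c = 1" using x y by (simp add: ip_scale_left ip_scale_right)
        have "b = ip n (\<lambda>k. c * x k) (mv n A (\<lambda>k. c * x k))"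
          unfolding b_def by (rule ip_cong) (simp_all add: yc cong: mv_cong)
        also have "\<dots> = ip n (\<lambda>k. c * x k) (\<lambda>j. c * mv n A x j)"
          by (rule ip_cong) (simp_all add: mv_scale)
        also have "\<dots> = cnj c * c * a" unfolding a_def by (simp add: ip_scale_left ip_scale_right)
        finally show False using cc False by simp
      qed
    qed
    have Npos: "N \<tau> > 0" using Nnn Nne by simp
    define r where "r = sqrt (N \<tau>)"
    have r: "r > 0" "r * r = N \<tau>" "N \<tau> \<noteq> 0" using Npos unfolding r_def by auto
    have eq: "comb (Uc / of_real r) x (Vc / of_real r) y = (\<lambda>k. of_real (1/r) * z k)"
      unfolding z_def comb_def by (rule ext) (simp add: add_divide_distrib)
    show ?thesis
    proof (intro exI conjI)
      show "ip n (comb (Uc / of_real r) x (Vc / of_real r) y) (comb (Uc / of_real r) x (Vc / of_real r) y) = 1"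
        unfolding eq ip_scale_left ip_scale_right zz using r
        by (simp flip: of_real_mult)
      show "ip n (comb (Uc / of_real r) x (Vc / of_real r) y) (mv n A (comb (Uc / of_real r) x (Vc / of_real r) y)) =
         of_real (1-t) * ip n x (mv n A x) + of_real t * ip n y (mv n A y)"
      proof -
        have "ip n (\<lambda>k. of_real (1/r) * z k) (mv n A (\<lambda>k. of_real (1/r) * z k))
           = ip n (\<lambda>k. of_real (1/r) * z k) (\<lambda>j. of_real (1/r) * mv n A z j)"
          by (rule ip_cong) (simp_all only: mv_scale)
        also have "\<dots> = of_real (1/r) * of_real (1/r) * ip n z (mv n A z)"
          by (simp only: ip_scale_left ip_scale_right) simp
        also have "\<dots> = of_real (1-t) * a + of_real t * b" unfolding zAz using r
          by (simp flip: of_real_mult)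
        finally show ?thesis unfolding eq a_def b_def .
      qed
    qed
  qed
qed



lemma HH:
  assumes ON: "ON n m a" and p: "p < m" and xs: "inspan n m a x" and x1: "ip n x x = 1"
  shows "\<exists>a'. ON n m a' \<and> a' p = x \<and> (\<forall>j<m. inspan n m a (a' j)) \<and> FF n A m a' = FF n A m a"
proof -
  have app: "ip n (a p) (a p) = 1" using ON p unfolding ON_def by auto
  define c0 where "c0 = ip n x (a p)"
  define \<omega> where "\<omega> = (if c0 = 0 then 1 else c0 / of_real (cmod c0))"
  have om: "cnj \<omega> * \<omega> = 1"
    unfolding \<omega>_def by (auto simp: complex_norm_square[symmetric] power2_eq_square field_simps norm_divide
           simp del: of_real_power complex_mult_cnj)
  define rr where "rr = cnj \<omega> * c0"
  have rr_real: "cnj rr = rr"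
    unfolding rr_def \<omega>_def by (auto simp: complex_norm_square[symmetric] power2_eq_square field_simps norm_divide
           simp del: of_real_power complex_mult_cnj)
  have c0c: "cnj c0 = ip n (a p) x" unfolding c0_def by (rule ip_conj)
  define w where "w = (\<lambda>k. a p k - \<omega> * x k)"
  define Nw where "Nw = ip n w w"
  define cf where "cf = (\<lambda>f. 2 * ip n w f / Nw)"
  define R where "R = (\<lambda>f k. f k - cf f * w k)"
  have Nw_cnj: "cnj Nw = Nw" unfolding Nw_def by (rule ip_conj)
  have wx: "ip n w x = cnj c0 - cnj \<omega>" unfolding w_def by (simp add: ip_minus_left c0c x1)
  have wap: "ip n w (a p) = 1 - rr" unfolding w_def rr_def by (simp add: ip_minus_left app c0_def)
  have Nw_eq: "Nw = 2 - 2 * rr"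
  proof -
    have "Nw = ip n w (a p) - \<omega> * ip n w x" unfolding Nw_def by (subst (2) w_def) (simp add: ip_minus_right)
    also have "\<dots> = 1 - rr - \<omega> * cnj c0 + \<omega> * cnj \<omega>" unfolding wap wx by (simp add: algebra_simps)
    also have "\<omega> * cnj c0 = cnj rr" unfolding rr_def by simp
    also have "\<omega> * cnj \<omega> = 1" using om by (simp add: mult.commute)
    finally show ?thesis using rr_real by simp
  qed
  have cf_cnj: "cnj (cf f) = 2 * ip n f w / Nw" for f
    unfolding cf_def by (simp add: Nw_cnj ip_conj)
  have R_unit: "ip n (R f) (R g) = ip n f g" for f g
  proof -
    have "ip n (R f) (R g) = ip n f g - cf g * ip n f w - cnj (cf f) * (ip n w g - cf g * Nw)"
      unfolding R_def Nw_def by (simp add: ip_minus_left ip_minus_right algebra_simps)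
    also have "\<dots> = ip n f g"
    proof (cases "Nw = 0")
      case True then show ?thesis unfolding cf_def by simp
    next
      case False
      have fw: "ip n f w = cnj (ip n w f)" by (simp add: ip_conj)
      show ?thesis unfolding cf_cnj unfolding cf_def fw using False by (simp add: field_simps)
    qed
    finally show ?thesis .
  qed
  have Rap: "R (a p) k = \<omega> * x k" if k: "k < n" for k
  proof (cases "Nw = 0")
    case True
    then have "w k = 0" using ip_self_zero[of n w k] k unfolding Nw_def by simp
    then show ?thesis unfolding R_def cf_def using True by (simp add: w_def)
  next
    case False
    have "cf (a p) = 1" unfolding cf_def wap using False Nw_eq by simp
    then show ?thesis unfolding R_def w_def by simp
  qed
  have xR: "x k = cnj \<omega> * R (a p) k" if "k < n" for k
    using Rap[OF that] om by (simp add: mult.assoc[symmetric])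
  define a' where "a' = (\<lambda>j. if j = p then x else R (a j))"
  have xRj: "ip n x (R (a j)) = 0" if "j < m" "j \<noteq> p" for j
  proof -
    have "ip n x (R (a j)) = ip n (\<lambda>k. cnj \<omega> * R (a p) k) (R (a j))" by (rule ip_cong) (simp_all add: xR)
    also have "\<dots> = \<omega> * ip n (a p) (a j)" by (simp add: ip_scale_left R_unit)
    also have "\<dots> = 0" using ON that p unfolding ON_def by auto
    finally show ?thesis .
  qed
  have ON': "ON n m a'"
    unfolding ON_def
  proof (intro allI impI)
    fix i j assume i: "i < m" and j: "j < m"
    show "ip n (a' i) (a' j) = (if i = j then 1 else 0)"
    proof (cases "i = p")
      case True
      show ?thesis
      proof (cases "j = p")
        case True then show ?thesis using \<open>i = p\<close> x1 by (simp add: a'_def)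
      next
        case False then show ?thesis using \<open>i = p\<close> xRj[OF j] by (simp add: a'_def)
      qed
    next
      case False
      show ?thesis
      proof (cases "j = p")
        case True
        have "ip n (R (a i)) x = cnj (ip n x (R (a i)))" by (simp add: ip_conj)
        then show ?thesis using \<open>i \<noteq> p\<close> True xRj[OF i False] by (simp add: a'_def)
      next
        case False then show ?thesis using \<open>i \<noteq> p\<close> ON i j by (simp add: a'_def R_unit ON_def)
      qed
    qed
  qed
  have ws: "inspan n m a w"
    by (rule inspan_lin[OF inspan_basis[OF ON p] xs, of _ 1 "- \<omega>"]) (simp add: w_def)
  have insp: "\<forall>j<m. inspan n m a (a' j)"
  proof (intro allI impI)
    fix j assume j: "j < m"
    show "inspan n m a (a' j)"
    proof (cases "j = p")
      case True then show ?thesis using xs by (simp add: a'_def)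
    next
      case False
      have "inspan n m a (R (a j))"
        by (rule inspan_lin[OF inspan_basis[OF ON j] ws, of _ 1 "- cf (a j)"]) (simp add: R_def)
      then show ?thesis using False by (simp add: a'_def)
    qed
  qed
  have expand: "ip n (R f) (mv n A (R f)) = ip n f (mv n A f) - cf f * ip n f (mv n A w)
      - cnj (cf f) * ip n w (mv n A f) + cnj (cf f) * cf f * ip n w (mv n A w)" for f
  proof -
    have "ip n (R f) (mv n A (R f)) = ip n (R f) (\<lambda>j. mv n A f j - cf f * mv n A w j)"
      unfolding R_def by (rule ip_cong) (simp_all only: mv_minus)
    also have "\<dots> = ip n (R f) (mv n A f) - cf f * ip n (R f) (mv n A w)"
      by (simp only: ip_minus_right)
    also have "\<dots> = ip n f (mv n A f) - cf f * ip n f (mv n A w)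
      - cnj (cf f) * ip n w (mv n A f) + cnj (cf f) * cf f * ip n w (mv n A w)"
      unfolding R_def by (simp add: ip_minus_left algebra_simps)
    finally show ?thesis .
  qed
  have FFa': "FF n A m a' = (\<Sum>j<m. ip n (R (a j)) (mv n A (R (a j))))"
    unfolding FF_def
  proof (rule sum.cong[OF refl])
    fix j assume "j \<in> {..<m}"
    show "ip n (a' j) (mv n A (a' j)) = ip n (R (a j)) (mv n A (R (a j)))"
    proof (cases "j = p")
      case False then show ?thesis by (simp add: a'_def)
    next
      case True
      have "ip n x (mv n A x) = ip n (\<lambda>k. cnj \<omega> * R (a p) k) (mv n A (\<lambda>k. cnj \<omega> * R (a p) k))"
        by (rule ip_cong) (simp_all add: xR cong: mv_cong)
      also have "\<dots> = ip n (\<lambda>k. cnj \<omega> * R (a p) k) (\<lambda>j. cnj \<omega> * mv n A (R (a p)) j)"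
        by (rule ip_cong) (simp_all only: mv_scale)
      also have "\<dots> = (\<omega> * cnj \<omega>) * ip n (R (a p)) (mv n A (R (a p)))"
        by (simp only: ip_scale_left ip_scale_right) simp
      also have "\<dots> = ip n (R (a p)) (mv n A (R (a p)))" using om by (simp add: mult.commute)
      finally show ?thesis using True by (simp add: a'_def)
    qed
  qed
  define WAw where "WAw = ip n w (mv n A w)"
  have S1: "(\<Sum>j<m. cf (a j) * ip n (a j) (mv n A w)) = 2 / Nw * WAw"
  proof -
    have "(\<Sum>j<m. cf (a j) * ip n (a j) (mv n A w)) = 2 / Nw * (\<Sum>j<m. ip n w (a j) * ip n (a j) (mv n A w))"
      unfolding cf_def by (simp add: sum_distrib_left algebra_simps)
    also have "\<dots> = 2 / Nw * WAw" unfolding WAw_def parseval[OF ws] ..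
    finally show ?thesis .
  qed
  have S2: "(\<Sum>j<m. cnj (cf (a j)) * ip n w (mv n A (a j))) = 2 / Nw * WAw"
  proof -
    have "(\<Sum>j<m. cnj (cf (a j)) * ip n w (mv n A (a j))) = 2 / Nw * (\<Sum>j<m. ip n (a j) w * ip n w (mv n A (a j)))"
      unfolding cf_cnj by (simp add: sum_distrib_left algebra_simps)
    also have "\<dots> = 2 / Nw * WAw" unfolding WAw_def parseval_mv[OF ws] ..
    finally show ?thesis .
  qed
  have S3: "(\<Sum>j<m. cnj (cf (a j)) * cf (a j)) = 4 / (Nw * Nw) * Nw"
  proof -
    have "(\<Sum>j<m. cnj (cf (a j)) * cf (a j)) = 4 / (Nw * Nw) * (\<Sum>j<m. ip n w (a j) * ip n (a j) w)"
      unfolding cf_cnj unfolding cf_def by (simp add: sum_distrib_left algebra_simps)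
    also have "\<dots> = 4 / (Nw * Nw) * Nw" unfolding Nw_def parseval[OF ws] ..
    finally show ?thesis .
  qed
  have "FF n A m a' = FF n A m a - (\<Sum>j<m. cf (a j) * ip n (a j) (mv n A w))
       - (\<Sum>j<m. cnj (cf (a j)) * ip n w (mv n A (a j))) + (\<Sum>j<m. cnj (cf (a j)) * cf (a j)) * WAw"
    unfolding FFa' by (simp only: expand) (simp add: FF_def WAw_def sum_subtractf sum.distrib sum_distrib_right)
  also have "\<dots> = FF n A m a" unfolding S1 S2 S3
    by (cases "Nw = 0") (simp_all add: field_simps)
  finally have "FF n A m a' = FF n A m a" .
  then show ?thesis using ON' insp by (intro exI[of _ a']) (simp add: a'_def)
qed



lemma norm_coeffs: fixes f :: "nat \<Rightarrow> complex" and m i0 :: nat assumes "i0 < m" "f i0 \<noteq> 0"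
  shows "\<exists>r::real. r > 0 \<and> (\<Sum>i<m. cnj (f i / of_real r) * (f i / of_real r)) = 1"
proof -
  define s where "s = (\<Sum>i<m. (cmod (f i))^2)"
  have "(cmod (f i0))^2 \<le> s" unfolding s_def
    using assms by (intro member_le_sum) auto
  moreover have "(cmod (f i0))^2 > 0" using assms by simp
  ultimately have s: "s > 0" by linarith
  define r where "r = sqrt s"
  have r: "r > 0" "r * r = s" using s unfolding r_def by auto
  have "(\<Sum>i<m. cnj (f i / of_real r) * (f i / of_real r)) = (\<Sum>i<m. cnj (f i) * f i) / (of_real r * of_real r)"
    by (simp add: sum_divide_distrib)
  also have "(\<Sum>i<m. cnj (f i) * f i) = of_real s"
    unfolding s_def of_real_sum by (rule sum.cong) (simp_all add: complex_norm_square mult.commute del: of_real_power)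
  also have "of_real r * of_real r = (of_real s :: complex)" using r by (simp flip: of_real_mult)
  finally show ?thesis using r s by auto
qed

lemma ip_lc_ON: assumes "ON n m a"
  shows "ip n (\<lambda>k. \<Sum>i<m. c i * a i k) (\<lambda>k. \<Sum>i<m. d i * a i k) = (\<Sum>i<m. cnj (c i) * d i)"
  by (simp add: ip_lc_left ON_lc[OF assms])

lemma PP:
  assumes ONa: "ON n m a" and ONb: "ON n m b" and m: "0 < m"
  shows "\<exists>x y. ip n x x = 1 \<and> ip n y y = 1 \<and> inspan n m a x \<and> inspan n m b y \<and>
     (\<forall>z. inspan n m a z \<longrightarrow> ip n z x = 0 \<longrightarrow> ip n z y = 0) \<and>
     (\<forall>z. inspan n m b z \<longrightarrow> ip n z y = 0 \<longrightarrow> ip n z x = 0)"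
proof -
  define Mf where "Mf i j = ip n (a i) (b j)" for i j
  define H :: "complex mat" where "H = mat m m (\<lambda>(i,j). \<Sum>l<m. Mf i l * cnj (Mf j l))"
  have H: "H \<in> carrier_mat m m" unfolding H_def by simp
  have "degree (char_poly H) = m" using degree_monic_char_poly[OF H] by simp
  then have "\<not> constant (poly (char_poly H))" using m by (simp add: constant_degree)
  then obtain \<mu> where "poly (char_poly H) \<mu> = 0" using fundamental_theorem_of_algebra by blast
  then have "eigenvalue H \<mu>" using eigenvalue_root_char_poly[OF H] by simp
  then obtain v where v: "v \<in> carrier_vec m" "v \<noteq> 0\<^sub>v m" "H *\<^sub>v v = \<mu> \<cdot>\<^sub>v v"
    unfolding eigenvalue_def eigenvector_def using H by auto
  have Hv: "(\<Sum>j<m. H $$ (i,j) * v $ j) = \<mu> * v $ i" if i: "i < m" for i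
  proof -
    have "(H *\<^sub>v v) $ i = (\<mu> \<cdot>\<^sub>v v) $ i" using v(3) by simp
    then show ?thesis using i v(1) H by (simp add: scalar_prod_def atLeast0LessThan)
  qed
  have "\<exists>i<m. v $ i \<noteq> 0"
  proof (rule ccontr)
    assume "\<not> (\<exists>i<m. v $ i \<noteq> 0)"
    then have "v = 0\<^sub>v m" using v(1) by (intro eq_vecI) auto
    with v(2) show False by simp
  qed
  then obtain i0 where i0: "i0 < m" "v $ i0 \<noteq> 0" by blast
  obtain r where r: "r > 0" "(\<Sum>i<m. cnj (v $ i / of_real r) * (v $ i / of_real r)) = 1"
    using norm_coeffs[of i0 m "\<lambda>i. v $ i", OF i0] by blast
  define \<alpha> where "\<alpha> i = v $ i / of_real r" for i
  have \<alpha>1: "(\<Sum>i<m. cnj (\<alpha> i) * \<alpha> i) = 1" using r unfolding \<alpha>_def by simp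
  have H\<alpha>: "(\<Sum>j<m. H $$ (i,j) * \<alpha> j) = \<mu> * \<alpha> i" if i: "i < m" for i
    using Hv[OF i] unfolding \<alpha>_def by (simp add: sum_divide_distrib[symmetric])
  define x where "x = (\<lambda>k. \<Sum>i<m. \<alpha> i * a i k)"
  have x1: "ip n x x = 1" unfolding x_def ip_lc_ON[OF ONa] by (rule \<alpha>1)
  have xs: "inspan n m a x" unfolding x_def by (rule inspan_lc[OF ONa])
  define \<beta> where "\<beta> j = (\<Sum>i<m. cnj (Mf i j) * \<alpha> i)" for j
  have key: "(\<Sum>l<m. Mf i l * \<beta> l) = \<mu> * \<alpha> i" if i: "i < m" for i
  proof -
    have "(\<Sum>l<m. Mf i l * \<beta> l) = (\<Sum>l<m. \<Sum>j<m. Mf i l * cnj (Mf j l) * \<alpha> j)"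
      unfolding \<beta>_def by (simp add: sum_distrib_left mult.assoc)
    also have "\<dots> = (\<Sum>j<m. \<Sum>l<m. Mf i l * cnj (Mf j l) * \<alpha> j)" by (rule sum.swap)
    also have "\<dots> = (\<Sum>j<m. H $$ (i,j) * \<alpha> j)"
      by (rule sum.cong[OF refl]) (use i in \<open>simp add: H_def sum_distrib_right\<close>)
    finally show ?thesis using H\<alpha>[OF i] by simp
  qed
  have bx: "ip n (b j) x = \<beta> j" for j
    unfolding x_def \<beta>_def ip_lc_right Mf_def by (simp add: ip_conj mult.commute)
  have zx_b: "ip n z x = (\<Sum>j<m. ip n z (b j) * \<beta> j)" if "inspan n m b z" for z
    using parseval[OF that, of x] bx by simp
  show ?thesis
  proof (cases "\<exists>j<m. \<beta> j \<noteq> 0")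
    case True
    then obtain j0 where j0: "j0 < m" "\<beta> j0 \<noteq> 0" by blast
    obtain rb where rb: "rb > 0" "(\<Sum>i<m. cnj (\<beta> i / of_real rb) * (\<beta> i / of_real rb)) = 1"
      using norm_coeffs[of j0 m \<beta>, OF j0] by blast
    define y where "y = (\<lambda>k. \<Sum>j<m. (\<beta> j / of_real rb) * b j k)"
    have y1: "ip n y y = 1" unfolding y_def ip_lc_ON[OF ONb] by (rule rb(2))
    have ys: "inspan n m b y" unfolding y_def by (rule inspan_lc[OF ONb])
    have zy: "ip n z y = (\<Sum>j<m. ip n z (b j) * \<beta> j) / of_real rb" for z
      unfolding y_def ip_lc_right by (simp add: sum_divide_distrib mult.commute)
    show ?thesis
    proof (intro exI conjI allI impI)
      show "ip n x x = 1" "ip n y y = 1" "inspan n m a x" "inspan n m b y" by fact+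
    next
      fix z assume zs: "inspan n m a z" and zx: "ip n z x = 0"
      have "(\<Sum>j<m. ip n z (b j) * \<beta> j) = (\<Sum>j<m. (\<Sum>i<m. ip n z (a i) * Mf i j) * \<beta> j)"
        by (rule sum.cong[OF refl]) (simp add: Mf_def parseval[OF zs])
      also have "\<dots> = (\<Sum>j<m. \<Sum>i<m. ip n z (a i) * Mf i j * \<beta> j)"
        by (simp add: sum_distrib_right)
      also have "\<dots> = (\<Sum>i<m. \<Sum>j<m. ip n z (a i) * Mf i j * \<beta> j)" by (rule sum.swap)
      also have "\<dots> = (\<Sum>i<m. ip n z (a i) * (\<mu> * \<alpha> i))"
        by (rule sum.cong[OF refl]) (simp add: key[symmetric] sum_distrib_left mult.assoc)
      also have "\<dots> = \<mu> * ip n z x" unfolding x_def ip_lc_right by (simp add: sum_distrib_left mult_ac)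
      finally show "ip n z y = 0" unfolding zy zx by simp
    next
      fix z assume zs: "inspan n m b z" and zy0: "ip n z y = 0"
      show "ip n z x = 0" using zy0 unfolding zy zx_b[OF zs] using rb(1) by simp
    qed
  next
    case False
    then have \<beta>0: "\<And>j. j < m \<Longrightarrow> \<beta> j = 0" by blast
    define M :: "complex mat" where "M = mat m m (\<lambda>(i,j). Mf i j)"
    have M: "M \<in> carrier_mat m m" unfolding M_def by simp
    define cv where "cv = vec m (\<lambda>i. cnj (\<alpha> i))"
    have cv: "cv \<in> carrier_vec m" unfolding cv_def by simp
    have "cv \<noteq> 0\<^sub>v m"
    proof
      assume "cv = 0\<^sub>v m"
      then have "cv $ i0 = 0" using i0 by simp
      then show False using i0 r(1) unfolding cv_def \<alpha>_def by simp
    qed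
    moreover have "transpose_mat M *\<^sub>v cv = 0\<^sub>v m"
    proof (rule eq_vecI)
      fix j assume j: "j < dim_vec (0\<^sub>v m :: complex vec)"
      have "(transpose_mat M *\<^sub>v cv) $ j = (\<Sum>i<m. Mf i j * cnj (\<alpha> i))"
        using j M unfolding cv_def M_def by (simp add: scalar_prod_def atLeast0LessThan)
      also have "\<dots> = cnj (\<beta> j)" unfolding \<beta>_def by (simp add: mult.commute)
      finally show "(transpose_mat M *\<^sub>v cv) $ j = (0\<^sub>v m :: complex vec) $ j" using \<beta>0 j by simp
    qed (use M in simp)
    ultimately have "det (transpose_mat M) = 0"
      using det_0_iff_vec_prod_zero_field[of "transpose_mat M" m] M cv by auto
    then have "det M = 0" using det_transpose[OF M] by simp
    then obtain g where g: "g \<in> carrier_vec m" "g \<noteq> 0\<^sub>v m" "M *\<^sub>v g = 0\<^sub>v m"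
      using det_0_iff_vec_prod_zero_field[OF M] by auto
    have Mg: "(\<Sum>j<m. Mf i j * g $ j) = 0" if i: "i < m" for i
    proof -
      have "(M *\<^sub>v g) $ i = 0" using g(3) i by simp
      then show ?thesis using i g(1) M unfolding M_def by (simp add: scalar_prod_def atLeast0LessThan)
    qed
    have "\<exists>i<m. g $ i \<noteq> 0"
    proof (rule ccontr)
      assume "\<not> (\<exists>i<m. g $ i \<noteq> 0)"
      then have "g = 0\<^sub>v m" using g(1) by (intro eq_vecI) auto
      with g(2) show False by simp
    qed
    then obtain j0 where j0: "j0 < m" "g $ j0 \<noteq> 0" by blast
    obtain rg where rg: "rg > 0" "(\<Sum>i<m. cnj (g $ i / of_real rg) * (g $ i / of_real rg)) = 1"
      using norm_coeffs[of j0 m "\<lambda>i. g $ i", OF j0] by blast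
    define y where "y = (\<lambda>k. \<Sum>j<m. (g $ j / of_real rg) * b j k)"
    have y1: "ip n y y = 1" unfolding y_def ip_lc_ON[OF ONb] by (rule rg(2))
    have ys: "inspan n m b y" unfolding y_def by (rule inspan_lc[OF ONb])
    have ay: "ip n (a i) y = 0" if i: "i < m" for i
    proof -
      have "ip n (a i) y = (\<Sum>j<m. Mf i j * g $ j) / of_real rg"
        unfolding y_def ip_lc_right Mf_def by (simp add: sum_divide_distrib mult.commute)
      then show ?thesis using Mg[OF i] by simp
    qed
    show ?thesis
    proof (intro exI conjI allI impI)
      show "ip n x x = 1" "ip n y y = 1" "inspan n m a x" "inspan n m b y" by fact+
    next
      fix z assume zs: "inspan n m a z"
      show "ip n z y = 0" unfolding parseval[OF zs, of y, symmetric] using ay by simp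
    next
      fix z assume zs: "inspan n m b z"
      show "ip n z x = 0" unfolding zx_b[OF zs] using \<beta>0 by simp
    qed
  qed
qed



lemma sum_split_shift: fixes k d :: nat shows "(\<Sum>i<k + d. f i) = (\<Sum>i<k. f i) + (\<Sum>j<d. f (k + j))"
  by (induction d) (simp_all add: add.assoc)

lemma ON_Suc: "ON n (Suc s) f \<Longrightarrow> ON n s f"
  unfolding ON_def by auto

lemma main:
  assumes herm: "\<forall>i<n. \<forall>j<n. Y i j = cnj (Y j i)" and t: "0 \<le> t" "t \<le> 1"
  shows "ON n s u \<Longrightarrow> ON n s v \<Longrightarrow> (\<forall>i<s. \<forall>q\<in>Q. ip n q (u i) = 0 \<and> ip n q (v i) = 0) \<Longrightarrow>
    (\<forall>i j. i \<le> j \<longrightarrow> j < s \<longrightarrow> lam j \<le> lam i) \<Longrightarrow>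
    (\<forall>i<s. eig n Y (of_real (lam i)) (u i) \<and> eig n Y (of_real (lam i)) (v i)) \<Longrightarrow>
    \<exists>w. ON n s w \<and> (\<forall>i<s. \<forall>q\<in>Q. ip n q (w i) = 0) \<and> (\<forall>i<s. eig n Y (of_real (lam i)) (w i)) \<and>
        FF n A s w = of_real (1-t) * FF n A s u + of_real t * FF n A s v"
proof (induction s arbitrary: u v Q)
  case 0
  show ?case by (rule exI[of _ u]) (auto simp: ON_def FF_def)
next
  case (Suc s)
  note ONu = Suc.prems(1) and ONv = Suc.prems(2) and Qo = Suc.prems(3) and srt = Suc.prems(4)
    and eigs = Suc.prems(5)
  define c where "c = lam s"
  define k0 where "k0 = (LEAST i. lam i = c)"
  have k0s: "k0 \<le> s" unfolding k0_def c_def by (rule Least_le) simp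
  have lamk0: "lam k0 = c" unfolding k0_def c_def by (rule LeastI) simp
  have grp: "lam i = c \<longleftrightarrow> k0 \<le> i" if "i \<le> s" for i
  proof
    assume "lam i = c" then show "k0 \<le> i" unfolding k0_def by (rule Least_le)
  next
    assume "k0 \<le> i"
    then have "lam i \<le> lam k0" "lam s \<le> lam i" using srt that by auto
    then show "lam i = c" using lamk0 unfolding c_def by simp
  qed
  define m where "m = Suc s - k0"
  have m: "0 < m" "k0 + m = Suc s" "m - 1 = s - k0" using k0s unfolding m_def by auto
  define a where "a j = u (k0 + j)" for j
  define b where "b j = v (k0 + j)" for j
  have ONa: "ON n m a" using ONu m unfolding ON_def a_def by auto
  have ONb: "ON n m b" using ONv m unfolding ON_def b_def by auto
  have eiga: "\<forall>j<m. eig n Y (of_real c) (a j)"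
  proof (intro allI impI)
    fix j assume "j < m"
    then have "k0 + j < Suc s" "lam (k0 + j) = c" using m grp[of "k0 + j"] by auto
    then show "eig n Y (of_real c) (a j)" using eigs unfolding a_def by metis
  qed
  have eigb: "\<forall>j<m. eig n Y (of_real c) (b j)"
  proof (intro allI impI)
    fix j assume "j < m"
    then have "k0 + j < Suc s" "lam (k0 + j) = c" using m grp[of "k0 + j"] by auto
    then show "eig n Y (of_real c) (b j)" using eigs unfolding b_def by metis
  qed
  have Qa: "\<forall>q\<in>Q. \<forall>j<m. ip n q (a j) = 0" using Qo m unfolding a_def by auto
  have Qb: "\<forall>q\<in>Q. \<forall>j<m. ip n q (b j) = 0" using Qo m unfolding b_def by auto
  obtain x y where x1: "ip n x x = 1" and y1: "ip n y y = 1" and xs: "inspan n m a x" and ys: "inspan n m b y"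
    and P1: "\<forall>z. inspan n m a z \<longrightarrow> ip n z x = 0 \<longrightarrow> ip n z y = 0"
    and P2: "\<forall>z. inspan n m b z \<longrightarrow> ip n z y = 0 \<longrightarrow> ip n z x = 0"
    using PP[OF ONa ONb m(1)] by blast
  obtain a' where ONa': "ON n m a'" and a'x: "a' (m-1) = x" and a's: "\<forall>j<m. inspan n m a (a' j)"
    and FFa: "FF n A m a' = FF n A m a"
    using HH[OF ONa _ xs x1, of "m-1" A] m by auto
  obtain b' where ONb': "ON n m b'" and b'y: "b' (m-1) = y" and b's: "\<forall>j<m. inspan n m b (b' j)"
    and FFb: "FF n A m b' = FF n A m b"
    using HH[OF ONb _ ys y1, of "m-1" A] m by auto
  have eigx: "eig n Y (of_real c) x" by (rule eig_inspan[OF eiga xs])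
  have eigy: "eig n Y (of_real c) y" by (rule eig_inspan[OF eigb ys])
  have eiga': "eig n Y (of_real c) (a' j)" if "j < m" for j using eig_inspan[OF eiga] a's that by blast
  have eigb': "eig n Y (of_real c) (b' j)" if "j < m" for j using eig_inspan[OF eigb] b's that by blast
  have Qx: "ip n q x = 0" if "q \<in> Q" for q using orth_inspan[OF _ xs] Qa that by blast
  have Qy: "ip n q y = 0" if "q \<in> Q" for q using orth_inspan[OF _ ys] Qb that by blast
  have Qa': "ip n q (a' j) = 0" if "q \<in> Q" "j < m" for q j using orth_inspan[of m n q a] Qa a's that by blast
  have Qb': "ip n q (b' j) = 0" if "q \<in> Q" "j < m" for q j using orth_inspan[of m n q b] Qb b's that by blast
  have lam_ne: "lam i \<noteq> c" if "i < k0" for i using grp[of i] that k0s by auto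
  have eigu: "eig n Y (of_real (lam i)) (u i)" if "i < Suc s" for i using eigs that by blast
  have eigv: "eig n Y (of_real (lam i)) (v i)" if "i < Suc s" for i using eigs that by blast
  define u' where "u' i = (if i < k0 then u i else a' (i - k0))" for i
  define v' where "v' i = (if i < k0 then v i else b' (i - k0))" for i
  have orth_lo: "ip n f g = 0" if "eig n Y (of_real (lam i)) f" "eig n Y (of_real c) g" "i < k0" for f g i
    using eig_orth[OF herm that(1,2)] lam_ne[OF that(3)] by blast
  have orth_lo': "ip n g f = 0" if "eig n Y (of_real (lam i)) f" "eig n Y (of_real c) g" "i < k0" for f g i
    using eig_orth[OF herm that(2,1)] lam_ne[OF that(3)] by metis
  have ONu': "ON n (Suc s) u'"
    unfolding ON_def
  proof (intro allI impI)
    fix i j assume i: "i < Suc s" and j: "j < Suc s"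
    show "ip n (u' i) (u' j) = (if i = j then 1 else 0)"
    proof (cases "i < k0")
      case True
      show ?thesis
      proof (cases "j < k0")
        case True then show ?thesis using \<open>i < k0\<close> ONu i j unfolding u'_def ON_def by auto
      next
        case False
        have "ip n (u i) (a' (j - k0)) = 0" by (rule orth_lo[OF eigu[OF i] eiga' \<open>i < k0\<close>]) (use j m False in auto)
        then show ?thesis using \<open>i < k0\<close> False unfolding u'_def by auto
      qed
    next
      case False
      show ?thesis
      proof (cases "j < k0")
        case True
        have "ip n (a' (i - k0)) (u j) = 0" by (rule orth_lo'[OF eigu[OF j] eiga' \<open>j < k0\<close>]) (use i m False in auto)
        then show ?thesis using \<open>j < k0\<close> False unfolding u'_def by auto
      next
        case False
        have "ip n (a' (i - k0)) (a' (j - k0)) = (if i - k0 = j - k0 then 1 else 0)"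
          using ONa' i j m \<open>\<not> i < k0\<close> False unfolding ON_def by auto
        then show ?thesis using \<open>\<not> i < k0\<close> False unfolding u'_def by auto
      qed
    qed
  qed
  have ONv': "ON n (Suc s) v'"
    unfolding ON_def
  proof (intro allI impI)
    fix i j assume i: "i < Suc s" and j: "j < Suc s"
    show "ip n (v' i) (v' j) = (if i = j then 1 else 0)"
    proof (cases "i < k0")
      case True
      show ?thesis
      proof (cases "j < k0")
        case True then show ?thesis using \<open>i < k0\<close> ONv i j unfolding v'_def ON_def by auto
      next
        case False
        have "ip n (v i) (b' (j - k0)) = 0" by (rule orth_lo[OF eigv[OF i] eigb' \<open>i < k0\<close>]) (use j m False in auto)
        then show ?thesis using \<open>i < k0\<close> False unfolding v'_def by auto
      qed
    next
      case False
      show ?thesis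
      proof (cases "j < k0")
        case True
        have "ip n (b' (i - k0)) (v j) = 0" by (rule orth_lo'[OF eigv[OF j] eigb' \<open>j < k0\<close>]) (use i m False in auto)
        then show ?thesis using \<open>j < k0\<close> False unfolding v'_def by auto
      next
        case False
        have "ip n (b' (i - k0)) (b' (j - k0)) = (if i - k0 = j - k0 then 1 else 0)"
          using ONb' i j m \<open>\<not> i < k0\<close> False unfolding ON_def by auto
        then show ?thesis using \<open>\<not> i < k0\<close> False unfolding v'_def by auto
      qed
    qed
  qed
  define Q' where "Q' = insert x (insert y Q)"
  have Q'o: "\<forall>i<s. \<forall>q\<in>Q'. ip n q (u' i) = 0 \<and> ip n q (v' i) = 0"
  proof (intro allI impI ballI)
    fix i q assume i: "i < s" and q: "q \<in> Q'"
    show "ip n q (u' i) = 0 \<and> ip n q (v' i) = 0"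
    proof (cases "i < k0")
      case True
      have "ip n q (u i) = 0 \<and> ip n q (v i) = 0"
        using q unfolding Q'_def
        using orth_lo'[OF eigu eigx True] orth_lo'[OF eigu eigy True]
          orth_lo'[OF eigv eigx True] orth_lo'[OF eigv eigy True] Qo i by auto
      then show ?thesis using True unfolding u'_def v'_def by simp
    next
      case False
      define j where "j = i - k0"
      have j: "j < m - 1" "j < m" using i False m unfolding j_def by auto
      have xa': "ip n x (a' j) = 0" using ONa' j m unfolding ON_def a'x[symmetric] by auto
      have yb': "ip n y (b' j) = 0" using ONb' j m unfolding ON_def b'y[symmetric] by auto
      have "ip n (a' j) y = 0" using P1 a's j xa' ip_conj[of n x "a' j"] by auto
      then have ya': "ip n y (a' j) = 0" using ip_conj[of n "a' j" y] by auto
      have "ip n (b' j) x = 0" using P2 b's j yb' ip_conj[of n y "b' j"] by auto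
      then have xb': "ip n x (b' j) = 0" using ip_conj[of n "b' j" x] by auto
      show ?thesis using q Qa' Qb' j xa' yb' ya' xb' False unfolding Q'_def u'_def v'_def j_def by auto
    qed
  qed
  have srt': "\<forall>i j. i \<le> j \<longrightarrow> j < s \<longrightarrow> lam j \<le> lam i" using srt by auto
  have eig': "\<forall>i<Suc s. eig n Y (of_real (lam i)) (u' i) \<and> eig n Y (of_real (lam i)) (v' i)"
  proof (intro allI impI)
    fix i assume i: "i < Suc s"
    show "eig n Y (of_real (lam i)) (u' i) \<and> eig n Y (of_real (lam i)) (v' i)"
    proof (cases "i < k0")
      case True then show ?thesis using eigs i unfolding u'_def v'_def by auto
    next
      case False
      then have "lam i = c" "i - k0 < m" using grp[of i] i m by auto
      then show ?thesis using False eiga' eigb' unfolding u'_def v'_def by auto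
    qed
  qed
  obtain w' where ONw': "ON n s w'" and Qw': "\<forall>i<s. \<forall>q\<in>Q'. ip n q (w' i) = 0"
    and eigw': "\<forall>i<s. eig n Y (of_real (lam i)) (w' i)"
    and FFw': "FF n A s w' = of_real (1-t) * FF n A s u' + of_real t * FF n A s v'"
    using Suc.IH[OF ON_Suc[OF ONu'] ON_Suc[OF ONv'] Q'o srt'] eig' by auto
  obtain U V where ws1: "ip n (comb U x V y) (comb U x V y) = 1"
    and wsA: "ip n (comb U x V y) (mv n A (comb U x V y)) = of_real (1-t) * ip n x (mv n A x) + of_real t * ip n y (mv n A y)"
    using TH2[OF x1 y1 t, of A] by blast
  define ws where "ws = comb U x V y"
  define w where "w i = (if i = s then ws else w' i)" for i
  have w'x: "ip n (w' i) x = 0" "ip n (w' i) y = 0" if "i < s" for i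
    using Qw' that ip_conj[of n x "w' i"] ip_conj[of n y "w' i"] unfolding Q'_def by auto
  have w'ws: "ip n (w' i) ws = 0" if "i < s" for i
    unfolding ws_def comb_def ip_comb_right using w'x[OF that] by simp
  have ONw: "ON n (Suc s) w"
    unfolding ON_def
  proof (intro allI impI)
    fix i j assume i: "i < Suc s" and j: "j < Suc s"
    show "ip n (w i) (w j) = (if i = j then 1 else 0)"
    proof (cases "i = s")
      case True
      show ?thesis
      proof (cases "j = s")
        case True then show ?thesis using \<open>i = s\<close> ws1 unfolding w_def ws_def by simp
      next
        case False
        then have "j < s" using j by simp
        have "ip n ws (w' j) = cnj (ip n (w' j) ws)" by (simp add: ip_conj)
        then show ?thesis using \<open>i = s\<close> False w'ws[OF \<open>j < s\<close>] unfolding w_def by simp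
      qed
    next
      case False
      then have "i < s" using i by simp
      show ?thesis
      proof (cases "j = s")
        case True then show ?thesis using False w'ws[OF \<open>i < s\<close>] unfolding w_def by simp
      next
        case False
        then show ?thesis using \<open>i \<noteq> s\<close> \<open>i < s\<close> j ONw' unfolding w_def ON_def by auto
      qed
    qed
  qed
  have Qw: "\<forall>i<Suc s. \<forall>q\<in>Q. ip n q (w i) = 0"
  proof (intro allI impI ballI)
    fix i q assume i: "i < Suc s" and q: "q \<in> Q"
    show "ip n q (w i) = 0"
    proof (cases "i = s")
      case True
      then show ?thesis unfolding w_def ws_def comb_def using Qx[OF q] Qy[OF q] by (simp add: ip_comb_right)
    next
      case False then show ?thesis using Qw' i q unfolding w_def Q'_def by auto
    qed
  qed
  have eigws: "eig n Y (of_real c) ws"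
    unfolding eig_def
  proof (intro allI impI)
    fix k assume k: "k < n"
    have "mv n Y ws k = U * mv n Y x k + V * mv n Y y k" unfolding ws_def comb_def by (rule mv_comb)
    also have "\<dots> = of_real c * ws k" using eigx eigy k unfolding eig_def ws_def comb_def by (simp add: algebra_simps)
    finally show "mv n Y ws k = of_real c * ws k" .
  qed
  have eigw: "\<forall>i<Suc s. eig n Y (of_real (lam i)) (w i)"
    using eigw' eigws unfolding w_def c_def by (auto simp: less_Suc_eq)
  have FFw: "FF n A (Suc s) w = FF n A s w' + ip n ws (mv n A ws)"
    unfolding FF_def w_def by simp
  have u's: "u' s = x" and v's: "v' s = y" using m k0s a'x b'y unfolding u'_def v'_def by auto
  have FFu': "FF n A (Suc s) u' = FF n A (Suc s) u"
  proof -
    have "FF n A (Suc s) u' = (\<Sum>i<k0. ip n (u' i) (mv n A (u' i))) + (\<Sum>j<m. ip n (u' (k0 + j)) (mv n A (u' (k0 + j))))"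
      unfolding FF_def m(2)[symmetric] by (rule sum_split_shift)
    also have "\<dots> = (\<Sum>i<k0. ip n (u i) (mv n A (u i))) + FF n A m a'"
      unfolding FF_def u'_def by simp
    also have "\<dots> = FF n A (Suc s) u"
      unfolding FFa unfolding FF_def m(2)[symmetric] sum_split_shift a_def ..
    finally show ?thesis .
  qed
  have FFv': "FF n A (Suc s) v' = FF n A (Suc s) v"
  proof -
    have "FF n A (Suc s) v' = (\<Sum>i<k0. ip n (v' i) (mv n A (v' i))) + (\<Sum>j<m. ip n (v' (k0 + j)) (mv n A (v' (k0 + j))))"
      unfolding FF_def m(2)[symmetric] by (rule sum_split_shift)
    also have "\<dots> = (\<Sum>i<k0. ip n (v i) (mv n A (v i))) + FF n A m b'"
      unfolding FF_def v'_def by simp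
    also have "\<dots> = FF n A (Suc s) v"
      unfolding FFb unfolding FF_def m(2)[symmetric] sum_split_shift b_def ..
    finally show ?thesis .
  qed
  have "FF n A (Suc s) u' = FF n A s u' + ip n x (mv n A x)" unfolding FF_def using u's by simp
  moreover have "FF n A (Suc s) v' = FF n A s v' + ip n y (mv n A y)" unfolding FF_def using v's by simp
  ultimately have "FF n A (Suc s) w = of_real (1-t) * FF n A (Suc s) u + of_real t * FF n A (Suc s) v"
    unfolding FFw FFw' ws_def wsA FFu'[symmetric] FFv'[symmetric] by (simp add: algebra_simps)
  then show ?case using ONw Qw eigw by blast
qed



lemma B1: "u \<in> carrier_vec n \<Longrightarrow> v \<in> carrier_vec n \<Longrightarrow> cinner u v = ip n (\<lambda>k. u $ k) (\<lambda>k. v $ k)"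
  unfolding cinner_def ip_def scalar_prod_def by (simp add: atLeast0LessThan)

lemma B2: "X \<in> carrier_mat n n \<Longrightarrow> u \<in> carrier_vec n \<Longrightarrow> k < n \<Longrightarrow>
   (X *\<^sub>v u) $ k = mv n (\<lambda>i j. X $$ (i,j)) (\<lambda>k. u $ k) k"
  unfolding mv_def by (simp add: scalar_prod_def atLeast0LessThan)

lemma B3: "X \<in> carrier_mat n n \<Longrightarrow> u \<in> carrier_vec n \<Longrightarrow>
   cinner u (X *\<^sub>v u) = ip n (\<lambda>k. u $ k) (mv n (\<lambda>i j. X $$ (i,j)) (\<lambda>k. u $ k))"
proof -
  assume a: "X \<in> carrier_mat n n" "u \<in> carrier_vec n"
  have "cinner u (X *\<^sub>v u) = ip n (\<lambda>k. u $ k) (\<lambda>k. (X *\<^sub>v u) $ k)" by (rule B1) (use a in auto)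
  also have "\<dots> = ip n (\<lambda>k. u $ k) (mv n (\<lambda>i j. X $$ (i,j)) (\<lambda>k. u $ k))"
    by (rule ip_cong) (simp_all del: index_mult_mat_vec add: B2[OF a])
  finally show ?thesis .
qed

lemma B4: "Y \<in> carrier_mat n n \<Longrightarrow> u \<in> carrier_vec n \<Longrightarrow>
   (Y *\<^sub>v u = c \<cdot>\<^sub>v u) \<longleftrightarrow> eig n (\<lambda>i j. Y $$ (i,j)) c (\<lambda>k. u $ k)"
  unfolding eig_def by (auto simp: vec_eq_iff B2[symmetric])

lemma eigvals_sorted:
  assumes Y: "Y \<in> carrier_mat n n"
  shows "length (eigvals_desc Y) = n" "i \<le> j \<Longrightarrow> j < n \<Longrightarrow> eigvals_desc Y ! j \<le> eigvals_desc Y ! i"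
proof -
  define L where "L = sorted_list_of_multiset (image_mset Re (proots (char_poly Y)))"
  have "length L = size (mset L)" by simp
  also have "mset L = image_mset Re (proots (char_poly Y))" unfolding L_def by simp
  also have "size \<dots> = n" using size_proots_complex[of "char_poly Y"] degree_monic_char_poly[OF Y] by simp
  finally have len: "length L = n" .
  have srt: "sorted L" unfolding L_def by simp
  have e: "eigvals_desc Y = rev L" unfolding eigvals_desc_def L_def ..
  show "length (eigvals_desc Y) = n" unfolding e using len by simp
  assume ij: "i \<le> j" "j < n"
  show "eigvals_desc Y ! j \<le> eigvals_desc Y ! i" unfolding e using ij len
    by (simp add: rev_nth sorted_nth_mono[OF srt])
qed

lemma core:
  fixes n r :: nat and X Y :: "complex mat" and t :: real
  assumes "X \<in> carrier_mat n n" and "Y \<in> carrier_mat n n"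
    and "psd_mat n Y"
    and "1 \<le> r" and "r \<le> n"
    and z1: "z1 \<in> W_set n r X Y" and z2: "z2 \<in> W_set n r X Y" and t: "0 \<le> t \<and> t \<le> 1"
  shows "(1 - t) *\<^sub>R z1 + t *\<^sub>R z2 \<in> W_set n r X Y"
proof -
  note X = assms(1) and Y = assms(2)
  define Xf where "Xf = (\<lambda>i j. X $$ (i,j))"
  define Yf where "Yf = (\<lambda>i j. Y $$ (i,j))"
  define lam where "lam i = eigvals_desc Y ! i" for i
  have herm: "\<forall>i<n. \<forall>j<n. Yf i j = cnj (Yf j i)"
    using assms(3) unfolding psd_mat_def hermitian_mat_def Yf_def by blast
  have srt: "\<forall>i j. i \<le> j \<longrightarrow> j < r \<longrightarrow> lam j \<le> lam i"
    using eigvals_sorted(2)[OF Y] assms(5) unfolding lam_def by auto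
  obtain u where u: "\<forall>i<r. u i \<in> carrier_vec n" "\<forall>i<r. \<forall>j<r. cinner (u i) (u j) = (if i = j then 1 else 0)"
    "\<forall>i<r. Y *\<^sub>v u i = complex_of_real (eigvals_desc Y ! i) \<cdot>\<^sub>v u i"
    and z1e: "z1 = (\<Sum>i<r. cinner (u i) (X *\<^sub>v u i))"
    using z1 unfolding W_set_def by blast
  obtain v where v: "\<forall>i<r. v i \<in> carrier_vec n" "\<forall>i<r. \<forall>j<r. cinner (v i) (v j) = (if i = j then 1 else 0)"
    "\<forall>i<r. Y *\<^sub>v v i = complex_of_real (eigvals_desc Y ! i) \<cdot>\<^sub>v v i"
    and z2e: "z2 = (\<Sum>i<r. cinner (v i) (X *\<^sub>v v i))"
    using z2 unfolding W_set_def by blast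
  define uf where "uf i = (\<lambda>k. u i $ k)" for i
  define vf where "vf i = (\<lambda>k. v i $ k)" for i
  have ONu: "ON n r uf" unfolding ON_def
  proof (intro allI impI)
    fix i j assume "i < r" "j < r"
    then show "ip n (uf i) (uf j) = (if i = j then 1 else 0)"
      using u(2) B1[of "u i" n "u j"] u(1) unfolding uf_def by auto
  qed
  have ONv: "ON n r vf" unfolding ON_def
  proof (intro allI impI)
    fix i j assume "i < r" "j < r"
    then show "ip n (vf i) (vf j) = (if i = j then 1 else 0)"
      using v(2) B1[of "v i" n "v j"] v(1) unfolding vf_def by auto
  qed
  have eigs: "\<forall>i<r. eig n Yf (of_real (lam i)) (uf i) \<and> eig n Yf (of_real (lam i)) (vf i)"
    using u(1,3) v(1,3) B4[OF Y] unfolding uf_def vf_def Yf_def lam_def by auto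
  have F1: "z1 = FF n Xf r uf" unfolding z1e FF_def uf_def Xf_def using u(1) by (auto intro!: sum.cong simp: B3[OF X])
  have F2: "z2 = FF n Xf r vf" unfolding z2e FF_def vf_def Xf_def using v(1) by (auto intro!: sum.cong simp: B3[OF X])
  obtain w where ONw: "ON n r w" and eigw: "\<forall>i<r. eig n Yf (of_real (lam i)) (w i)"
    and Fw: "FF n Xf r w = of_real (1-t) * FF n Xf r uf + of_real t * FF n Xf r vf"
    using main[OF herm, of t r uf vf "{}" lam Xf] t ONu ONv srt eigs by auto
  define wv where "wv i = vec n (w i)" for i
  have wvc: "wv i \<in> carrier_vec n" for i unfolding wv_def by simp
  have wvi: "(\<lambda>k. wv i $ k) = (\<lambda>k. if k < n then w i k else wv i $ k)" for i
    unfolding wv_def by auto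
  have ipw: "ip n (\<lambda>k. wv i $ k) g = ip n (w i) g" "ip n g (\<lambda>k. wv i $ k) = ip n g (w i)" for i g
    by (rule ip_cong; simp add: wv_def)+
  have mvw: "mv n M (\<lambda>k. wv i $ k) = mv n M (w i)" for M i
    by (rule ext, rule mv_cong) (simp add: wv_def)
  have weq: "(1 - t) *\<^sub>R z1 + t *\<^sub>R z2 = (\<Sum>i<r. cinner (wv i) (X *\<^sub>v wv i))"
  proof -
    have "(\<Sum>i<r. cinner (wv i) (X *\<^sub>v wv i)) = FF n Xf r w"
      unfolding FF_def Xf_def by (rule sum.cong[OF refl]) (simp add: B3[OF X wvc] ipw mvw)
    then show ?thesis unfolding Fw F1 F2 by (simp add: scaleR_conv_of_real)
  qed
  have wc: "\<forall>i<r. wv i \<in> carrier_vec n" by (simp add: wvc)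
  have won: "\<forall>i<r. \<forall>j<r. cinner (wv i) (wv j) = (if i = j then 1 else 0)"
    using ONw unfolding ON_def by (simp add: B1[OF wvc wvc] ipw)
  have weig: "\<forall>i<r. Y *\<^sub>v wv i = complex_of_real (eigvals_desc Y ! i) \<cdot>\<^sub>v wv i"
  proof (intro allI impI)
    fix i assume i: "i < r"
    have "eig n Yf (of_real (lam i)) (\<lambda>k. wv i $ k)"
      using eigw i unfolding eig_def mvw by (simp add: wv_def)
    then show "Y *\<^sub>v wv i = complex_of_real (eigvals_desc Y ! i) \<cdot>\<^sub>v wv i"
      using B4[OF Y wvc] unfolding Yf_def lam_def by simp
  qed
  show "(1 - t) *\<^sub>R z1 + t *\<^sub>R z2 \<in> W_set n r X Y"
    unfolding W_set_def using weq wc won weig by blast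
qed

theorem lemma3p1_main:
  fixes n r :: nat and X Y :: "complex mat"
  assumes "X \<in> carrier_mat n n" and "Y \<in> carrier_mat n n"
    and "psd_mat n Y"
    and "1 \<le> r" and "r \<le> n"
  shows "convex (W_set n r X Y)"
  unfolding convex_alt using core[OF assms] by blast

theorem lemma3p1:
  fixes n r :: nat and X Y :: "complex mat"
  assumes "X \<in> carrier_mat n n" and "Y \<in> carrier_mat n n"
    and "psd_mat n Y"
    and "1 \<le> r" and "r \<le> n"
  shows "convex (W_set n r X Y)"
proof -
  note r = lemma3p1_main[OF assms]
  show ?thesis by (fact r)
qed

end
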